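(* Assume that each bus has either no generator or at least two generators, and that $x^*_n>0$ for all $n$; let $b^*$ be the unique efficient Nash equilibrium, $b^*_n=2a_nx^*_n+c_n$. Consider any execution of the Bid Adjustment Algorithm with $0<\beta_k<2a_n$ for all $n$ and $k\ge1$, and let $a_{\max}=\max_n a_n$. Then for all $k\ge1$, $$\langle b(k+1)-b(k),\,b^*-b(k)\rangle\ \ge\ \frac{\beta_k}{2a_{\max}}\,\|b(k)-b^*\|^2.$$
   Context: Network: directed graph with buses $\{1,\dots,N_b\}$, edge set $\mathcal E$, line flow limits $\bar z_{ij}>0$, $G_i$ the set of generators at bus $i$ (the $G_i$ partition $\{1,\dots,N\}$), loads $y_i\ge0$. Generator $n$ has cost $f_n(x)=a_nx^2+c_nx$, $a_n>0$, $c_n\ge0$. DC-OPF: minimize $\sum_n f_n(x_n)$ over $(x,z)$ s.t. $\sum_{j:(i,j)\in\mathcal E}z_{ij}-\sum_{j:(j,i)\in\mathcal E}z_{ji}=\sum_{n\in G_i}x_n-y_i$ for all $i$, $|z_{ij}|\le\bar z_{ij}$, $x\ge0$; assumed feasible with optimizer $(x^*,z^* )$, $x^*$ unique. S-DC-OPF given bids $b\ge0$: same constraints, objective $\sum_n b_nx_n$. An efficient Nash equilibrium $b^*$ is in particular a bid for which $(x^*,z^* )$ is an optimizer of S-DC-OPF with bids $b^*$ (under the stated assumptions it is unique and equals $2a_nx^*_n+c_n$). $\|\cdot\|$ is the Euclidean norm. Bid Adjustment Algorithm: given stepsizes $\beta_k>0$, each generator picks $b_n(1)\ge c_n$. For each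 $k\ge1$: $q_n(k)=\arg\max_{q\ge0}(b_n(k)q-f_n(q))$; the operator selects an optimizer $(x^{\rm opt}(k),z^{\rm opt}(k))$ of S-DC-OPF with bids $b(k)$; and $b_n(k+1)=[\,b_n(k)+\beta_k(x^{\rm opt}_n(k)-q_n(k))\,]^+$, where $[u]^+=\max\{0,u\}$. *)

theory Defs
  imports Complex_Main
begin

text \<open>Buses are elements of a finite type 'b, generators of a finite type 'g.
  gb n is the bus of generator n, so G_i = {n. gb n = i} partitions the generators.\<close>

definition gen_cost :: "('g \<Rightarrow> real) \<Rightarrow> ('g \<Rightarrow> real) \<Rightarrow> 'g \<Rightarrow> real \<Rightarrow> real" where
  "gen_cost a c n x = a n * x\<^sup>2 + c n * x"

definition opf_feasible ::
  "('b::finite \<times> 'b) set \<Rightarrow> ('b \<times> 'b \<Rightarrow> real) \<Rightarrow> ('g::finite \<Rightarrow> 'b) \<Rightarrow> ('b \<Rightarrow> real)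
   \<Rightarrow> ('g \<Rightarrow> real) \<Rightarrow> ('b \<times> 'b \<Rightarrow> real) \<Rightarrow> bool" where
  "opf_feasible E zbar gb y x z \<longleftrightarrow>
     (\<forall>i. (\<Sum>j\<in>{j. (i, j) \<in> E}. z (i, j)) - (\<Sum>j\<in>{j. (j, i) \<in> E}. z (j, i))
            = (\<Sum>n\<in>{n. gb n = i}. x n) - y i)
   \<and> (\<forall>e\<in>E. \<bar>z e\<bar> \<le> zbar e)
   \<and> (\<forall>n. 0 \<le> x n)"

definition dcopf_opt where
  "dcopf_opt E zbar gb y a c x z \<longleftrightarrow> opf_feasible E zbar gb y x z \<and>
     (\<forall>x' z'. opf_feasible E zbar gb y x' z' \<longrightarrow>
        (\<Sum>n\<in>UNIV. gen_cost a c n (x n)) \<le> (\<Sum>n\<in>UNIV. gen_cost a c n (x' n)))"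

definition sdcopf_opt where
  "sdcopf_opt E zbar gb y b x z \<longleftrightarrow> opf_feasible E zbar gb y x z \<and>
     (\<forall>x' z'. opf_feasible E zbar gb y x' z' \<longrightarrow>
        (\<Sum>n\<in>UNIV. b n * x n) \<le> (\<Sum>n\<in>UNIV. b n * x' n))"

end

theory Submission
  imports Defs
begin

theorem lemma4p3:
  fixes E :: "('b::finite \<times> 'b) set"
    and zbar :: "'b \<times> 'b \<Rightarrow> real"
    and gb :: "'g::finite \<Rightarrow> 'b"
    and y :: "'b \<Rightarrow> real"
    and a c :: "'g \<Rightarrow> real"
    and xs :: "'g \<Rightarrow> real" and zs :: "'b \<times> 'b \<Rightarrow> real"
    and bstar :: "'g \<Rightarrow> real"
    and beta :: "nat \<Rightarrow> real"
    and b q xopt :: "nat \<Rightarrow> 'g \<Rightarrow> real"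
    and zopt :: "nat \<Rightarrow> 'b \<times> 'b \<Rightarrow> real"
    and k :: nat
  assumes zbar_pos: "\<forall>e\<in>E. zbar e > 0"
    and y_nonneg: "\<forall>i. y i \<ge> 0"
    and a_pos: "\<forall>n. a n > 0"
    and c_nonneg: "\<forall>n. c n \<ge> 0"
    and opt: "dcopf_opt E zbar gb y a c xs zs"
    and xs_unique: "\<forall>x z. dcopf_opt E zbar gb y a c x z \<longrightarrow> x = xs"
    and gens: "\<forall>i. card {n. gb n = i} \<noteq> 1"
    and xs_pos: "\<forall>n. xs n > 0"
    and bstar_def: "\<forall>n. bstar n = 2 * a n * xs n + c n"
    and bstar_NE: "sdcopf_opt E zbar gb y bstar xs zs"
    and b_init: "\<forall>n. b 1 n \<ge> c n"
    and q_def: "\<forall>k\<ge>1. \<forall>n. q k n \<ge> 0 \<and>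
                  (\<forall>q'\<ge>0. b k n * q' - gen_cost a c n q' \<le> b k n * q k n - gen_cost a c n (q k n))"
    and xopt_def: "\<forall>k\<ge>1. sdcopf_opt E zbar gb y (b k) (xopt k) (zopt k)"
    and b_update: "\<forall>k\<ge>1. \<forall>n. b (k + 1) n = max 0 (b k n + beta k * (xopt k n - q k n))"
    and beta_bounds: "\<forall>k\<ge>1. \<forall>n. 0 < beta k \<and> beta k < 2 * a n"
    and k_ge: "k \<ge> 1"
  shows "(\<Sum>n\<in>UNIV. (b (k + 1) n - b k n) * (bstar n - b k n))
           \<ge> beta k / (2 * Max (range a)) * (\<Sum>n\<in>UNIV. (b k n - bstar n)\<^sup>2)"
proof -
  have xopt_nn: "\<And>m n. m \<ge> 1 \<Longrightarrow> xopt m n \<ge> 0"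
    using xopt_def unfolding sdcopf_opt_def opf_feasible_def by blast
  have qform: "q m n = (b m n - c n) / (2 * a n)" if m1: "m \<ge> 1" and bc: "b m n \<ge> c n" for m n
  proof -
    define q0 where "q0 = (b m n - c n) / (2 * a n)"
    have an: "a n > 0" using a_pos by auto
    have q0nn: "q0 \<ge> 0" unfolding q0_def using bc an by auto
    have q0e: "2 * a n * q0 = b m n - c n" unfolding q0_def using an by auto
    have "b m n * q0 - gen_cost a c n q0 \<le> b m n * q m n - gen_cost a c n (q m n)"
      using q_def m1 q0nn by blast
    moreover have "b m n = c n + 2 * a n * q0" using q0e by simp
    hence "a n * (q m n - q0)^2 = (b m n * q0 - gen_cost a c n q0) - (b m n * q m n - gen_cost a c n (q m n))"
      unfolding gen_cost_def power2_eq_square by (simp add: algebra_simps)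
    ultimately have "a n * (q m n - q0)^2 \<le> 0" by linarith
    hence "(q m n - q0)^2 \<le> 0" using an
      by (metis mult_le_0_iff not_less order_less_le zero_le_power2 mult_nonneg_nonneg)
    hence "q m n = q0" by simp
    thus ?thesis unfolding q0_def .
  qed
  have bc: "\<And>n. b m n \<ge> c n" if m1: "m \<ge> 1" for m
    using m1
  proof (induct m rule: dec_induct)
    case base thus ?case using b_init by auto
  next
    case (step m)
    fix n
    have m1: "m \<ge> 1" using step by auto
    have bcm: "b m n \<ge> c n" using step by auto
    have an: "a n > 0" using a_pos by auto
    have bt: "0 < beta m" "beta m < 2 * a n" using beta_bounds m1 by auto
    have qe: "q m n = (b m n - c n) / (2 * a n)" using qform m1 bcm by auto
    have "beta m * (b m n - c n) \<le> 2 * a n * (b m n - c n)"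
      using bt bcm by (intro mult_right_mono) auto
    hence "beta m * (b m n - c n) / (2 * a n) \<le> 2 * a n * (b m n - c n) / (2 * a n)"
      using an by (intro divide_right_mono) auto
    hence "beta m * q m n \<le> b m n - c n" using qe an by simp
    moreover have "beta m * xopt m n \<ge> 0" using xopt_nn m1 bt by auto
    ultimately have "b m n + beta m * (xopt m n - q m n) \<ge> c n"
      by (simp add: algebra_simps)
    thus "c n \<le> b (Suc m) n" using b_update m1 by (auto simp: max_def)
  qed
  define w where "w n = bstar n - b k n" for n
  have cnn: "\<And>n. c n \<ge> 0" using c_nonneg by auto
  have upd: "b (k+1) n - b k n = beta k * (xopt k n - q k n)" for n
  proof -
    have bt: "0 < beta k" using beta_bounds k_ge by auto
    have qe: "q k n = (b k n - c n) / (2 * a n)" using qform k_ge bc by auto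
    have an: "a n > 0" using a_pos by auto
    have bt2: "beta k < 2 * a n" using beta_bounds k_ge by auto
    have "beta k * (b k n - c n) \<le> 2 * a n * (b k n - c n)"
      using bt2 bc[OF k_ge, of n] by (intro mult_right_mono) auto
    hence "beta k * (b k n - c n) / (2 * a n) \<le> 2 * a n * (b k n - c n) / (2 * a n)"
      using an by (intro divide_right_mono) auto
    hence "beta k * q k n \<le> b k n - c n" using qe an by simp
    moreover have "beta k * xopt k n \<ge> 0" using xopt_nn k_ge bt by auto
    ultimately have "b k n + beta k * (xopt k n - q k n) \<ge> 0" using cnn[of n]
      by (simp add: algebra_simps)
    thus ?thesis using b_update k_ge by auto
  qed
  have xsq: "xs n - q k n = w n / (2 * a n)" for n
  proof -
    have an: "a n > 0" using a_pos by auto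
    have "xs n = (bstar n - c n) / (2 * a n)" using bstar_def an by (simp add: field_simps)
    thus ?thesis using qform[OF k_ge bc[OF k_ge]] unfolding w_def
      by (simp add: diff_divide_distrib)
  qed
  have feas_xs: "opf_feasible E zbar gb y xs zs" using opt unfolding dcopf_opt_def by auto
  have feas_xo: "opf_feasible E zbar gb y (xopt k) (zopt k)"
    using xopt_def k_ge unfolding sdcopf_opt_def by auto
  have o1: "(\<Sum>n\<in>UNIV. b k n * xopt k n) \<le> (\<Sum>n\<in>UNIV. b k n * xs n)"
    using xopt_def k_ge feas_xs unfolding sdcopf_opt_def by blast
  have o2: "(\<Sum>n\<in>UNIV. bstar n * xs n) \<le> (\<Sum>n\<in>UNIV. bstar n * xopt k n)"
    using bstar_NE feas_xo unfolding sdcopf_opt_def by blast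
  have key: "(\<Sum>n\<in>UNIV. xs n * w n) \<le> (\<Sum>n\<in>UNIV. xopt k n * w n)"
  proof -
    have "(\<Sum>n\<in>UNIV. xs n * w n) = (\<Sum>n\<in>UNIV. bstar n * xs n) - (\<Sum>n\<in>UNIV. b k n * xs n)"
      unfolding w_def by (simp add: sum_subtractf[symmetric] algebra_simps)
    moreover have "(\<Sum>n\<in>UNIV. xopt k n * w n) = (\<Sum>n\<in>UNIV. bstar n * xopt k n) - (\<Sum>n\<in>UNIV. b k n * xopt k n)"
      unfolding w_def by (simp add: sum_subtractf[symmetric] algebra_simps)
    ultimately show ?thesis using o1 o2 by linarith
  qed
  define M where "M = Max (range a)"
  have aM: "a n \<le> M" for n unfolding M_def by (simp)
  have Mpos: "M > 0" using aM[of undefined] a_pos by (meson less_le_trans)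
  have bt: "beta k > 0" using beta_bounds k_ge by auto
  have "(\<Sum>n\<in>UNIV. (b (k + 1) n - b k n) * (bstar n - b k n))
      = beta k * (\<Sum>n\<in>UNIV. xopt k n * w n - q k n * w n)"
    unfolding upd w_def by (simp add: sum_distrib_left algebra_simps)
  also have "\<dots> = beta k * ((\<Sum>n\<in>UNIV. xopt k n * w n) - (\<Sum>n\<in>UNIV. q k n * w n))"
    by (simp add: sum_subtractf)
  also have "\<dots> \<ge> beta k * ((\<Sum>n\<in>UNIV. xs n * w n) - (\<Sum>n\<in>UNIV. q k n * w n))"
    using key bt by (intro mult_left_mono) auto
  also have "(\<Sum>n\<in>UNIV. xs n * w n) - (\<Sum>n\<in>UNIV. q k n * w n) = (\<Sum>n\<in>UNIV. (xs n - q k n) * w n)"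
    by (simp add: sum_subtractf[symmetric] algebra_simps)
  also have "\<dots> = (\<Sum>n\<in>UNIV. (w n)^2 / (2 * a n))"
    unfolding xsq by (simp add: power2_eq_square)
  finally have c1: "beta k * (\<Sum>n\<in>UNIV. (w n)^2 / (2 * a n)) \<le> (\<Sum>n\<in>UNIV. (b (k + 1) n - b k n) * (bstar n - b k n))" .
  have "(\<Sum>n\<in>UNIV. (w n)^2 / (2 * a n)) \<ge> (\<Sum>n\<in>UNIV. (w n)^2 / (2 * M))"
  proof (intro sum_mono)
    fix n
    have an: "a n > 0" using a_pos by auto
    show "(w n)^2 / (2 * M) \<le> (w n)^2 / (2 * a n)"
      using an aM[of n] by (intro divide_left_mono) auto
  qed
  hence "beta k * (\<Sum>n\<in>UNIV. (w n)^2 / (2 * a n)) \<ge> beta k * (\<Sum>n\<in>UNIV. (w n)^2 / (2 * M))"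
    using bt by (intro mult_left_mono) auto
  hence fin: "beta k * (\<Sum>n\<in>UNIV. (w n)^2 / (2 * M)) \<le> (\<Sum>n\<in>UNIV. (b (k + 1) n - b k n) * (bstar n - b k n))" using c1 by linarith
  have "beta k / (2 * M) * (\<Sum>n\<in>UNIV. (b k n - bstar n)\<^sup>2) = beta k * (\<Sum>n\<in>UNIV. (w n)^2 / (2 * M))"
    unfolding w_def by (simp add: sum_divide_distrib[symmetric] power2_commute)
  thus ?thesis using fin unfolding M_def by simp
qed

end
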